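(* Let $\Gamma>0$ and $B\in\mathbb{R}$. For $N\in\mathbb{N}_+$ let \[ H_N^{\mathrm{CW}}=-\frac{\Gamma}{2N}\sum_{x,y=1}^{N}\sigma_3(x)\sigma_3(y)-B\sum_{x=1}^{N}\sigma_1(x) \] acting on $\bigotimes_{i=1}^N\mathbb{C}^2$ (a $2^N\times2^N$ real symmetric matrix), and let $\bar H_N^{\mathrm{CW}}=H_N^{\mathrm{CW}}/N$. Then $\{\bar H_N^{\mathrm{CW}}\}_N$ is a zero-distributed GLT sequence; in particular, for every continuous compactly supported $F:\mathbb{R}\to\mathbb{C}$, \[ \lim_{N\to\infty}\frac{1}{2^N}\sum_{j=1}^{2^N}F\big(\lambda_j(\bar H_N^{\mathrm{CW}})\big)=F(0), \] and the same holds with singular values in place of eigenvalues.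
   Context: Pauli matrices: $\sigma_1=\begin{pmatrix}0&1\\1&0\end{pmatrix}$, $\sigma_3=\begin{pmatrix}1&0\\0&-1\end{pmatrix}$. $\sigma_i(x)$ denotes the operator on $\bigotimes_{k=1}^N\mathbb{C}^2$ acting as $\sigma_i$ on the $x$-th tensor factor and as the $2\times2$ identity on the others. A matrix-sequence $\{A_N\}_N$ (with $A_N$ of size $d_N\to\infty$) is zero-distributed if $\lim_{N}\frac{1}{d_N}\sum_jF(\sigma_j(A_N))=F(0)$ for all $F\in C_c(\mathbb{R})$; zero-distributed sequences are exactly the GLT sequences with GLT symbol $0$. *)

theory Defs
  imports Complex_Main "Jordan_Normal_Form.Char_Poly" "HOL-Computational_Algebra.Polynomial"
begin

text \<open>Computational basis of the N-fold tensor product of C^2: index i in {0..<2^N};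
  tensor factor k (1 \<le> k \<le> N) is in basis state bit i (k-1), where bit i m = (i div 2^m) mod 2.\<close>

definition bit_of :: "nat \<Rightarrow> nat \<Rightarrow> nat" where
  "bit_of i m = (i div 2 ^ m) mod 2"

definition pauli1 :: "real mat" where
  "pauli1 = mat_of_rows_list 2 [[0, 1], [1, 0]]"

definition pauli3 :: "real mat" where
  "pauli3 = mat_of_rows_list 2 [[1, 0], [0, -1]]"

text \<open>sigma_at N x M: the operator acting as the 2x2 matrix M on the x-th tensor factor
  (1 \<le> x \<le> N) and as the identity on the others (entries of the Kronecker product).\<close>
definition sigma_at :: "nat \<Rightarrow> nat \<Rightarrow> real mat \<Rightarrow> real mat" where
  "sigma_at N x M = mat (2 ^ N) (2 ^ N) (\<lambda>(i, j).
      \<Prod>k\<in>{1..N}. (if k = x then M $$ (bit_of i (k - 1), bit_of j (k - 1))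
                    else (if bit_of i (k - 1) = bit_of j (k - 1) then 1 else 0)))"

definition H_CW :: "real \<Rightarrow> real \<Rightarrow> nat \<Rightarrow> real mat" where
  "H_CW \<Gamma> B N = mat (2 ^ N) (2 ^ N) (\<lambda>(i, j).
      - (\<Gamma> / (2 * real N)) * (\<Sum>x\<in>{1..N}. \<Sum>y\<in>{1..N}.
            (sigma_at N x pauli3 * sigma_at N y pauli3) $$ (i, j))
      - B * (\<Sum>x\<in>{1..N}. sigma_at N x pauli1 $$ (i, j)))"

definition Hbar_CW :: "real \<Rightarrow> real \<Rightarrow> nat \<Rightarrow> real mat" where
  "Hbar_CW \<Gamma> B N = (1 / real N) \<cdot>\<^sub>m H_CW \<Gamma> B N"

text \<open>Eigenvalues (with algebraic multiplicity) of a real matrix, as the multiset of real roots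
  of its characteristic polynomial (for real symmetric matrices these are all eigenvalues).\<close>
definition eigenvalues_mset :: "real mat \<Rightarrow> real multiset" where
  "eigenvalues_mset A = proots (char_poly A)"

definition singular_values_mset :: "real mat \<Rightarrow> real multiset" where
  "singular_values_mset A = image_mset sqrt (proots (char_poly (transpose_mat A * A)))"

definition Cc_fun :: "(real \<Rightarrow> complex) \<Rightarrow> bool" where
  "Cc_fun F \<longleftrightarrow> continuous_on UNIV F \<and> (\<exists>R. \<forall>t. \<bar>t\<bar> > R \<longrightarrow> F t = 0)"

end

theory Submission
  imports Defs "Jordan_Normal_Form.Schur_Decomposition"
begin

lemma bit_of_bit: "bit_of i m = of_bool (bit i m)"
  unfolding bit_of_def by (simp add: bit_iff_odd odd_iff_mod_2_eq_one) 
lemma less_pow_bit: "(i::nat) < 2^N \<Longrightarrow> N \<le> l \<Longrightarrow> \<not> bit i l"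
  by (metis bit_take_bit_iff linorder_not_le take_bit_nat_eq_self_iff)
lemma flip_less: "(i::nat) < 2^N \<Longrightarrow> k < N \<Longrightarrow> flip_bit k i < 2^N"
  apply (subst take_bit_nat_eq_self_iff[symmetric]) apply (rule bit_eqI)
  apply (auto simp: bit_take_bit_iff bit_flip_bit_iff)
  by (metis less_pow_bit not_le)
lemma bits_inj: "(i::nat) < 2^N \<Longrightarrow> j < 2^N \<Longrightarrow> (\<And>k. k < N \<Longrightarrow> bit i k = bit j k) \<Longrightarrow> i = j"
  by (metis bit_eq_iff less_pow_bit not_le)

lemma pauli3_idx: "a < 2 \<Longrightarrow> b < 2 \<Longrightarrow> pauli3 $$ (a,b) = (if a = b then (if a = 0 then 1 else -1) else 0)"
  unfolding pauli3_def mat_of_rows_list_def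
  by (cases a; cases b) auto
lemma pauli1_idx: "a < 2 \<Longrightarrow> b < 2 \<Longrightarrow> pauli1 $$ (a,b) = (if a = b then 0 else 1)"
  unfolding pauli1_def mat_of_rows_list_def
  by (cases a; cases b) auto

lemma bit_of_lt: "bit_of i k < 2" unfolding bit_of_def by simp

definition Eq_other :: "nat \<Rightarrow> nat \<Rightarrow> nat \<Rightarrow> nat \<Rightarrow> bool" where
  "Eq_other N x i j \<longleftrightarrow> (\<forall>k\<in>{1..N}-{x}. bit_of i (k-1) = bit_of j (k-1))"

lemma sigma_at_idx:
  assumes x: "x \<in> {1..N}" and i: "i < 2^N" and j: "j < 2^N"
  shows "sigma_at N x M $$ (i,j) = M $$ (bit_of i (x-1), bit_of j (x-1)) * (if Eq_other N x i j then 1 else 0)"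
proof -
  let ?f = "\<lambda>k. (if k = x then M $$ (bit_of i (k - 1), bit_of j (k - 1))
                    else (if bit_of i (k - 1) = bit_of j (k - 1) then 1 else 0))"
  have "sigma_at N x M $$ (i,j) = (\<Prod>k\<in>{1..N}. ?f k)"
    unfolding sigma_at_def using i j by simp
  also have "\<dots> = ?f x * (\<Prod>k\<in>{1..N}-{x}. ?f k)"
    using x by (simp add: prod.remove)
  also have "(\<Prod>k\<in>{1..N}-{x}. ?f k) = (\<Prod>k\<in>{1..N}-{x}. (if bit_of i (k - 1) = bit_of j (k - 1) then 1 else 0))"
    by (rule prod.cong) auto
  also have "\<dots> = (if Eq_other N x i j then 1 else 0)"
  proof (cases "Eq_other N x i j")
    case True then show ?thesis unfolding Eq_other_def by (simp add: prod.neutral)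
  next
    case False
    then obtain k where "k \<in> {1..N}-{x}" "bit_of i (k-1) \<noteq> bit_of j (k-1)" unfolding Eq_other_def by blast
    then show ?thesis using False by (intro trans[OF prod_zero]) auto
  qed
  finally show ?thesis by simp
qed

definition sg :: "nat \<Rightarrow> nat \<Rightarrow> real" where "sg i k = (if bit i k then -1 else 1)"

lemma sigma3_idx:
  assumes x: "x \<in> {1..N}" and i: "i < 2^N" and j: "j < 2^N"
  shows "sigma_at N x pauli3 $$ (i,j) = (if i = j then sg i (x-1) else 0)"
proof (cases "i = j")
  case True
  then show ?thesis using sigma_at_idx[OF x i j] pauli3_idx[OF bit_of_lt bit_of_lt]
    by (simp add: Eq_other_def sg_def bit_of_bit)
next
  case False
  then obtain k where k: "k < N" "bit i k \<noteq> bit j k" using bits_inj[OF i j] by blast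
  show ?thesis
  proof (cases "k = x - 1")
    case True
    then show ?thesis using sigma_at_idx[OF x i j] k False
      by (simp add: bit_of_bit pauli3_idx)
  next
    case False2: False
    have "\<not> Eq_other N x i j" unfolding Eq_other_def using k False2 x
      by (auto simp: bit_of_bit intro!: bexI[of _ "Suc k"])
    then show ?thesis using sigma_at_idx[OF x i j] False by simp
  qed
qed

definition Qf :: "nat \<Rightarrow> nat \<Rightarrow> nat \<Rightarrow> nat \<Rightarrow> bool" where
  "Qf N x i j \<longleftrightarrow> bit_of i (x-1) \<noteq> bit_of j (x-1) \<and> Eq_other N x i j"

lemma sigma1_idx:
  assumes x: "x \<in> {1..N}" and i: "i < 2^N" and j: "j < 2^N"
  shows "sigma_at N x pauli1 $$ (i,j) = (if Qf N x i j then 1 else 0)"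
  using sigma_at_idx[OF x i j] pauli1_idx[OF bit_of_lt bit_of_lt] unfolding Qf_def by auto

lemma sigma33_idx:
  assumes x: "x \<in> {1..N}" and y: "y \<in> {1..N}" and i: "i < 2^N" and j: "j < 2^N"
  shows "(sigma_at N x pauli3 * sigma_at N y pauli3) $$ (i,j) = (if i = j then sg i (x-1) * sg i (y-1) else 0)"
proof -
  have "(sigma_at N x pauli3 * sigma_at N y pauli3) $$ (i,j)
     = (\<Sum>k<2^N. sigma_at N x pauli3 $$ (i,k) * sigma_at N y pauli3 $$ (k,j))"
    using i j by (simp add: sigma_at_def scalar_prod_def atLeast0LessThan)
  also have "\<dots> = (\<Sum>k<2^N. (if k = i then (if i = j then sg i (x-1) * sg i (y-1) else 0) else 0))"
    by (rule sum.cong) (auto simp: sigma3_idx[OF x i] sigma3_idx[OF y _ j])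
  also have "\<dots> = (if i = j then sg i (x-1) * sg i (y-1) else 0)"
    using i by (simp add: sum.delta)
  finally show ?thesis .
qed

definition Mag :: "nat \<Rightarrow> nat \<Rightarrow> real" where "Mag N i = (\<Sum>x\<in>{1..N}. sg i (x-1))"
definition Cf :: "nat \<Rightarrow> nat \<Rightarrow> nat \<Rightarrow> real" where "Cf N i j = (\<Sum>x\<in>{1..N}. if Qf N x i j then 1 else 0)"

lemma H_idx:
  assumes i: "i < 2^N" and j: "j < 2^N"
  shows "H_CW \<Gamma> B N $$ (i,j) = - (\<Gamma> / (2 * real N)) * (if i = j then (Mag N i)^2 else 0) - B * Cf N i j"
proof -
  have "(\<Sum>x\<in>{1..N}. \<Sum>y\<in>{1..N}. (sigma_at N x pauli3 * sigma_at N y pauli3) $$ (i, j))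
       = (\<Sum>x\<in>{1..N}. \<Sum>y\<in>{1..N}. (if i = j then sg i (x-1) * sg i (y-1) else 0))"
    by (intro sum.cong refl) (simp add: sigma33_idx i j)
  also have "\<dots> = (if i = j then (Mag N i)^2 else 0)"
    by (simp add: Mag_def power2_eq_square sum_product)
  finally have 1: "(\<Sum>x\<in>{1..N}. \<Sum>y\<in>{1..N}. (sigma_at N x pauli3 * sigma_at N y pauli3) $$ (i, j)) = (if i = j then (Mag N i)^2 else 0)" .
  have 2: "(\<Sum>x\<in>{1..N}. sigma_at N x pauli1 $$ (i, j)) = Cf N i j"
    unfolding Cf_def by (intro sum.cong refl) (simp add: sigma1_idx i j)
  show ?thesis unfolding H_CW_def using i j 1 2 by simp
qed

lemma sg_sq: "sg i k * sg i k = 1" by (simp add: sg_def)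

lemma flip_flip: "flip_bit k (flip_bit k (i::nat)) = i"
  by (rule bit_eqI) (auto simp: bit_flip_bit_iff)

lemma sg_orth:
  assumes kl: "k < N" "l < N" "k \<noteq> l"
  shows "(\<Sum>i<2^N. sg i k * sg i l) = 0"
proof -
  let ?f = "\<lambda>i. sg i k * sg i l"
  have "(\<Sum>i<2^N. ?f i) = (\<Sum>i<2^N. ?f (flip_bit k i))"
    by (rule sum.reindex_bij_witness[of _ "flip_bit k" "flip_bit k"])
       (auto simp: flip_less kl flip_flip)
  also have "\<dots> = (\<Sum>i<2^N. - ?f i)"
    using kl by (intro sum.cong refl) (auto simp: sg_def bit_flip_bit_iff)
  finally show ?thesis by (simp add: sum_negf)
qed

lemma sum_Mag_sq: "(\<Sum>i<2^N. (Mag N i)^2) = real N * 2^N"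
proof -
  have "(\<Sum>i<2^N. (Mag N i)^2) = (\<Sum>x\<in>{1..N}. \<Sum>y\<in>{1..N}. \<Sum>i<2^N. sg i (x-1) * sg i (y-1))"
    unfolding Mag_def power2_eq_square sum_product
    by (subst sum.swap, rule sum.cong[OF refl], rule sum.swap)
  also have "\<dots> = (\<Sum>x\<in>{1..N}. \<Sum>y\<in>{1..N}. if x = y then 2^N else 0)"
    by (intro sum.cong refl) (auto simp: sg_sq sg_orth)
  also have "\<dots> = real N * 2^N" by simp
  finally show ?thesis .
qed

lemma abs_Mag: "\<bar>Mag N i\<bar> \<le> real N"
proof -
  have "\<bar>Mag N i\<bar> \<le> (\<Sum>x\<in>{1..N}. \<bar>sg i (x-1)\<bar>)" unfolding Mag_def by (rule sum_abs)
  also have "\<dots> = (\<Sum>x\<in>{1..N}. 1)" by (rule sum.cong) (auto simp: sg_def)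
  also have "\<dots> = real N" by simp
  finally show ?thesis .
qed

lemma Mag4: "(Mag N i)^4 \<le> (real N)^2 * (Mag N i)^2"
proof -
  have "(Mag N i)^2 \<le> (real N)^2" using abs_Mag[of N i]
    by (metis abs_ge_zero power2_abs power_mono)
  hence "(Mag N i)^2 * (Mag N i)^2 \<le> (real N)^2 * (Mag N i)^2"
    by (intro mult_right_mono) auto
  thus ?thesis by (simp add: power4_eq_xxxx power2_eq_square mult.assoc)
qed

lemma Qf_unique_x:
  assumes "Qf N x i j" "Qf N y i j" "x \<in> {1..N}" "y \<in> {1..N}"
  shows "x = y"
  using assms unfolding Qf_def Eq_other_def by (metis DiffI singletonD)

lemma Cf_card: "Cf N i j = real (card {x\<in>{1..N}. Qf N x i j})"
  unfolding Cf_def by (simp add: sum.If_cases Int_def conj_commute)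

lemma Cf_le1: "Cf N i j \<le> 1" and Cf_ge0: "0 \<le> Cf N i j"
proof -
  have "card {x\<in>{1..N}. Qf N x i j} \<le> Suc 0"
    using Qf_unique_x by (intro card_le_Suc0_iff_eq[THEN iffD2]) auto
  then show "Cf N i j \<le> 1" unfolding Cf_card by simp
  show "0 \<le> Cf N i j" unfolding Cf_card by simp
qed

lemma Cf_sq: "(Cf N i j)^2 \<le> Cf N i j"
  using Cf_le1[of N i j] Cf_ge0[of N i j] by (simp add: power2_eq_square mult_left_le_one_le)

lemma bit_of_cases: "bit_of i k = 0 \<or> bit_of i k = 1" unfolding bit_of_def by auto

lemma Qf_unique_j:
  assumes x: "x \<in> {1..N}" and i: "i < 2^N" and j: "j < 2^N" and j': "j' < 2^N"
    and q: "Qf N x i j" "Qf N x i j'"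
  shows "j = j'"
proof (rule bits_inj[OF j j'])
  fix k assume k: "k < N"
  have "bit_of j k = bit_of j' k"
  proof (cases "k = x - 1")
    case True
    then show ?thesis using q bit_of_cases[of i k] bit_of_cases[of j k] bit_of_cases[of j' k]
      unfolding Qf_def by auto
  next
    case False
    then have "Suc k \<in> {1..N} - {x}" using k x by auto
    then show ?thesis using q unfolding Qf_def Eq_other_def by (metis diff_Suc_1)
  qed
  then show "bit j k = bit j' k" by (cases "bit j k"; cases "bit j' k") (auto simp: bit_of_bit)
qed

lemma sum_Qf_j:
  assumes x: "x \<in> {1..N}" and i: "i < 2^N"
  shows "(\<Sum>j<2^N. (if Qf N x i j then 1 else 0::real)) \<le> 1"
proof -
  have "(\<Sum>j<2^N. (if Qf N x i j then 1 else 0::real)) = real (card {j\<in>{..<2^N}. Qf N x i j})"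
    by (simp add: sum.If_cases Int_def conj_commute)
  also have "card {j\<in>{..<2^N}. Qf N x i j} \<le> Suc 0"
    using Qf_unique_j[OF x i] by (intro card_le_Suc0_iff_eq[THEN iffD2]) auto
  finally show ?thesis by simp
qed

lemma sum_Cf:
  "(\<Sum>i<2^N. \<Sum>j<2^N. (Cf N i j)^2) \<le> real N * 2^N"
proof -
  have "(\<Sum>i<2^N. \<Sum>j<2^N. (Cf N i j)^2) \<le> (\<Sum>i<(2::nat)^N. \<Sum>j<(2::nat)^N. Cf N i j)"
    by (intro sum_mono Cf_sq)
  also have "\<dots> = (\<Sum>i<(2::nat)^N. \<Sum>x\<in>{1..N}. \<Sum>j<(2::nat)^N. (if Qf N x i j then 1 else 0::real))"
    unfolding Cf_def by (rule sum.cong[OF refl]) (rule sum.swap)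
  also have "\<dots> \<le> (\<Sum>i<(2::nat)^N. \<Sum>x\<in>{1..N}. (1::real))"
    by (intro sum_mono sum_Qf_j) auto
  also have "\<dots> = real N * 2^N" by simp
  finally show ?thesis .
qed

lemma sq_bound: "(- u - v)^2 \<le> 2 * u^2 + 2 * (v::real)^2"
proof -
  have "0 \<le> (u - v)^2" by simp
  thus ?thesis by (simp add: power2_eq_square algebra_simps)
qed

lemma frob_H:
  assumes N: "N > 0"
  shows "(\<Sum>i<(2::nat)^N. \<Sum>j<(2::nat)^N. (H_CW \<Gamma> B N $$ (i,j))^2) \<le> (\<Gamma>^2/2 + 2*B^2) * (real N * 2^N)"
proof -
  define a where "a = (\<lambda>i j. (\<Gamma> / (2 * real N)) * (if i = j then (Mag N i)^2 else 0))"
  define b where "b = (\<lambda>i j. B * Cf N i j)"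
  have "(\<Sum>i<(2::nat)^N. \<Sum>j<(2::nat)^N. (H_CW \<Gamma> B N $$ (i,j))^2)
      \<le> (\<Sum>i<(2::nat)^N. \<Sum>j<(2::nat)^N. 2 * (a i j)^2 + 2 * (b i j)^2)"
  proof (intro sum_mono)
    fix i j assume "i \<in> {..<(2::nat)^N}" "j \<in> {..<(2::nat)^N}"
    then have "H_CW \<Gamma> B N $$ (i,j) = - a i j - b i j" by (simp add: H_idx a_def b_def)
    then show "(H_CW \<Gamma> B N $$ (i,j))^2 \<le> 2 * (a i j)^2 + 2 * (b i j)^2" using sq_bound by simp
  qed
  also have "\<dots> = 2 * (\<Sum>i<(2::nat)^N. \<Sum>j<(2::nat)^N. (a i j)^2) + 2 * B^2 * (\<Sum>i<(2::nat)^N. \<Sum>j<(2::nat)^N. (Cf N i j)^2)"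
    by (simp add: sum.distrib sum_distrib_left power_mult_distrib b_def mult.assoc)
  finally have 1: "(\<Sum>i<(2::nat)^N. \<Sum>j<(2::nat)^N. (H_CW \<Gamma> B N $$ (i,j))^2) \<le> 2 * (\<Sum>i<(2::nat)^N. \<Sum>j<(2::nat)^N. (a i j)^2) + 2 * B^2 * (\<Sum>i<(2::nat)^N. \<Sum>j<(2::nat)^N. (Cf N i j)^2)" .
  have "(\<Sum>i<(2::nat)^N. \<Sum>j<(2::nat)^N. (a i j)^2) = (\<Sum>i<(2::nat)^N. (\<Gamma> / (2 * real N))^2 * (Mag N i)^4)"
  proof (rule sum.cong[OF refl])
    fix i :: nat assume i: "i \<in> {..<2^N}"
    have "(\<Sum>j<(2::nat)^N. (a i j)^2) = (\<Sum>j<(2::nat)^N. if i = j then (\<Gamma> / (2 * real N))^2 * (Mag N i)^4 else 0)"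
      by (rule sum.cong[OF refl]) (simp add: a_def power_mult_distrib power2_eq_square power4_eq_xxxx)
    also have "\<dots> = (\<Gamma> / (2 * real N))^2 * (Mag N i)^4" using i by (simp add: sum.delta)
    finally show "(\<Sum>j<(2::nat)^N. (a i j)^2) = (\<Gamma> / (2 * real N))^2 * (Mag N i)^4" .
  qed
  also have "\<dots> = (\<Gamma> / (2 * real N))^2 * (\<Sum>i<(2::nat)^N. (Mag N i)^4)" by (simp add: sum_distrib_left)
  finally have 2: "(\<Sum>i<(2::nat)^N. \<Sum>j<(2::nat)^N. (a i j)^2) = (\<Gamma> / (2 * real N))^2 * (\<Sum>i<(2::nat)^N. (Mag N i)^4)" .
  have 3: "(\<Sum>i<(2::nat)^N. (Mag N i)^4) \<le> (real N)^2 * (real N * 2^N)"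
  proof -
    have "(\<Sum>i<(2::nat)^N. (Mag N i)^4) \<le> (\<Sum>i<(2::nat)^N. (real N)^2 * (Mag N i)^2)"
      by (intro sum_mono Mag4)
    also have "\<dots> = (real N)^2 * (real N * 2^N)" by (simp add: sum_distrib_left[symmetric] sum_Mag_sq)
    finally show ?thesis .
  qed
  have 4: "(\<Sum>i<(2::nat)^N. \<Sum>j<(2::nat)^N. (Cf N i j)^2) \<le> real N * 2^N" by (rule sum_Cf)
  have 5: "(\<Gamma> / (2 * real N))^2 * (\<Sum>i<(2::nat)^N. (Mag N i)^4) \<le> (\<Gamma> / (2 * real N))^2 * ((real N)^2 * (real N * 2^N))"
    by (intro mult_left_mono 3) simp
  have 6: "(\<Gamma> / (2 * real N))^2 * ((real N)^2 * (real N * 2^N)) = \<Gamma>^2/4 * (real N * 2^N)"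
    using N by (simp add: power2_eq_square field_simps)
  have 7: "2 * B^2 * (\<Sum>i<(2::nat)^N. \<Sum>j<(2::nat)^N. (Cf N i j)^2) \<le> 2 * B^2 * (real N * 2^N)"
    by (intro mult_left_mono 4) simp
  show ?thesis using 1 2 5 6 7 by (simp only: algebra_simps)
qed

lemma proots_linprod: "proots (\<Prod>r\<leftarrow>rs. [:- r, 1:]) = mset (rs :: 'a :: idom list)"
proof (induct rs)
  case (Cons r rs)
  have nz: "(\<Prod>r\<leftarrow>rs. [:- r, 1:]) \<noteq> 0" by (auto simp: prod_list_zero_iff)
  have "proots (\<Prod>r\<leftarrow>r#rs. [:- r, 1:]) = proots [:- r, 1:] + proots (\<Prod>r\<leftarrow>rs. [:- r, 1:])"
    unfolding list.map prod_list.Cons by (rule proots_mult[OF _ nz]) simp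
  then show ?case using Cons by simp
qed simp

definition tr :: "nat \<Rightarrow> 'a :: comm_ring_1 mat \<Rightarrow> 'a" where "tr n M = (\<Sum>i<n. M $$ (i,i))"

lemma tr_comm: assumes "X \<in> carrier_mat n n" "Y \<in> carrier_mat n n"
  shows "tr n (X * Y) = tr n (Y * X)"
proof -
  have "tr n (X * Y) = (\<Sum>i<n. \<Sum>k<n. X $$ (i,k) * Y $$ (k,i))"
    unfolding tr_def using assms by (intro sum.cong refl) (auto simp: scalar_prod_def atLeast0LessThan)
  also have "\<dots> = (\<Sum>k<n. \<Sum>i<n. Y $$ (k,i) * X $$ (i,k))"
    by (subst sum.swap) (simp add: mult.commute)
  also have "\<dots> = tr n (Y * X)"
    unfolding tr_def using assms by (intro sum.cong refl) (auto simp: scalar_prod_def atLeast0LessThan)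
  finally show ?thesis .
qed

lemma ut_sq:
  fixes B :: "'a :: comm_ring_1 mat"
  assumes B: "B \<in> carrier_mat n n" and ut: "upper_triangular B"
  shows "upper_triangular (B * B)" "\<And>i. i < n \<Longrightarrow> (B * B) $$ (i,i) = (B $$ (i,i))^2"
proof -
  show "upper_triangular (B * B)"
  proof (rule upper_triangularI)
    fix i j assume ji: "j < i" and i: "i < dim_row (B * B)"
    have "(B * B) $$ (i,j) = (\<Sum>k<n. B $$ (i,k) * B $$ (k,j))"
      using B i ji by (auto simp: scalar_prod_def atLeast0LessThan)
    also have "\<dots> = 0"
    proof (rule sum.neutral, intro ballI)
      fix k assume k: "k \<in> {..<n}"
      show "B $$ (i,k) * B $$ (k,j) = 0"
      proof (cases "k < i")
        case True then have "B $$ (i,k) = 0" using ut B i by (intro upper_triangularD) auto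
        then show ?thesis by simp
      next
        case False then have "B $$ (k,j) = 0" using ut B ji k by (intro upper_triangularD) auto
        then show ?thesis by simp
      qed
    qed
    finally show "(B * B) $$ (i,j) = 0" .
  qed
  fix i assume i: "i < n"
  have "(B * B) $$ (i,i) = (\<Sum>k<n. B $$ (i,k) * B $$ (k,i))"
    using B i by (auto simp: scalar_prod_def atLeast0LessThan)
  also have "\<dots> = (\<Sum>k<n. if k = i then (B $$ (i,i))^2 else 0)"
  proof (rule sum.cong[OF refl])
    fix k assume k: "k \<in> {..<n}"
    show "B $$ (i,k) * B $$ (k,i) = (if k = i then (B $$ (i,i))^2 else 0)"
    proof (cases "k < i")
      case True then have "B $$ (i,k) = 0" using ut B i by (intro upper_triangularD) auto
      then show ?thesis using True by simp
    next
      case False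
      show ?thesis
      proof (cases "k = i")
        case False2: False
        then have "B $$ (k,i) = 0" using ut B k False by (intro upper_triangularD) auto
        then show ?thesis using False2 by simp
      qed (simp add: power2_eq_square)
    qed
  qed
  also have "\<dots> = (B $$ (i,i))^2" using i by (simp add: sum.delta)
  finally show "(B * B) $$ (i,i) = (B $$ (i,i))^2" .
qed

lemma herm_real_ev:
  fixes A :: "real mat"
  assumes A: "A \<in> carrier_mat n n" and sym: "\<forall>i<n. \<forall>j<n. A$$(i,j) = A$$(j,i)"
    and root: "poly (char_poly (map_mat complex_of_real A)) e = 0"
  shows "Im e = 0"
proof -
  let ?A = "map_mat complex_of_real A"
  have Ac: "?A \<in> carrier_mat n n" using A by simp
  have "eigenvalue ?A e" using eigenvalue_root_char_poly[OF Ac] root by simp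
  then obtain v where "eigenvector ?A v e" unfolding eigenvalue_def by auto
  then have v: "v \<in> carrier_vec n" and v0: "v \<noteq> 0\<^sub>v n" and ev: "?A *\<^sub>v v = e \<cdot>\<^sub>v v"
    unfolding eigenvector_def using A by auto
  have evi: "(\<Sum>j<n. of_real (A$$(i,j)) * v$j) = e * v$i" if i: "i < n" for i
  proof -
    have "(?A *\<^sub>v v) $ i = (e \<cdot>\<^sub>v v) $ i" using ev by simp
    then show ?thesis using i A v by (simp add: scalar_prod_def atLeast0LessThan)
  qed
  define s where "s = (\<Sum>i<n. cnj (v$i) * (\<Sum>j<n. of_real (A$$(i,j)) * v$j))"
  define w where "w = (\<Sum>i<n. cnj (v$i) * v$i)"
  have "s = (\<Sum>i<n. cnj (v$i) * (e * v$i))" unfolding s_def by (intro sum.cong refl) (simp add: evi)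
  then have s1: "s = e * w" by (simp add: w_def sum_distrib_left mult_ac)
  have "cnj s = (\<Sum>i<n. \<Sum>j<n. of_real (A$$(i,j)) * v$i * cnj (v$j))"
    unfolding s_def by (simp add: sum_distrib_left mult.commute mult.left_commute)
  also have "\<dots> = (\<Sum>j<n. \<Sum>i<n. of_real (A$$(i,j)) * v$i * cnj (v$j))"
    by (rule sum.swap)
  also have "\<dots> = s"
    unfolding s_def sum_distrib_left
    by (intro sum.cong refl) (use sym in \<open>auto simp: mult.commute mult.left_commute\<close>)
  finally have "cnj s = s" .
  then have Ims: "Im s = 0" by (metis complex_cnj_cancel_iff complex_cnj_zero_iff complex_eq_cancel_iff2 Im_complex_of_real Reals_cnj_iff Reals_cases)
  have w: "w = of_real (\<Sum>i<n. (cmod (v$i))^2)"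
    unfolding w_def of_real_sum by (intro sum.cong refl) (simp add: complex_norm_square mult.commute del: of_real_power)
  obtain i where i: "i < n" "v$i \<noteq> 0" using v v0 by (metis eq_vecI carrier_vecD index_zero_vec(1) index_zero_vec(2))
  have pos: "(\<Sum>i<n. (cmod (v$i))^2) > 0"
  proof -
    have "(cmod (v$i))^2 \<le> (\<Sum>i<n. (cmod (v$i))^2)"
      using i by (intro member_le_sum) auto
    moreover have "(cmod (v$i))^2 > 0" using i by simp
    ultimately show ?thesis by linarith
  qed
  have "Im s = Im e * (\<Sum>i<n. (cmod (v$i))^2)" unfolding s1 w by simp
  then show ?thesis using Ims pos by simp
qed

interpretation rp: map_poly_comm_ring_hom complex_of_real ..

lemma map_poly_linprod: "map_poly complex_of_real (\<Prod>r\<leftarrow>rs. [:- r, 1:]) = (\<Prod>r\<leftarrow>rs. [:- complex_of_real r, 1:])"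
proof (induct rs)
  case (Cons r rs)
  have "map_poly complex_of_real (\<Prod>r\<leftarrow>r#rs. [:- r, 1:]) = map_poly complex_of_real [:- r, 1:] * map_poly complex_of_real (\<Prod>r\<leftarrow>rs. [:- r, 1:])"
    unfolding list.map prod_list.Cons by (rule rp.hom_mult)
  then show ?case using Cons by simp
qed simp

lemma sym_spectral:
  fixes A :: "real mat"
  assumes A: "A \<in> carrier_mat n n" and sym: "\<forall>i<n. \<forall>j<n. A$$(i,j) = A$$(j,i)"
  shows "\<exists>rs. length rs = n \<and> proots (char_poly A) = mset rs \<and>
    proots (char_poly (A*A)) = mset (map (\<lambda>r. r^2) rs) \<and> (\<Sum>r\<leftarrow>rs. r^2) = (\<Sum>i<n. \<Sum>j<n. (A$$(i,j))^2)"
proof -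
  let ?A = "map_mat complex_of_real A"
  have Ac: "?A \<in> carrier_mat n n" using A by simp
  have hom: "char_poly ?A = map_poly of_real (char_poly A)" by (rule of_real_hom.char_poly_hom[OF A])
  obtain es where cp: "char_poly ?A = (\<Prod>e\<leftarrow>es. [:- e, 1:])" and len: "length es = n"
    using char_poly_factorized[OF Ac] by blast
  have real: "Im e = 0" if e: "e \<in> set es" for e
  proof (rule herm_real_ev[OF A sym])
    show "poly (char_poly ?A) e = 0" unfolding cp using e
      by (auto simp: poly_prod_list prod_list_zero_iff)
  qed
  define rs where "rs = map Re es"
  have "map (complex_of_real \<circ> Re) es = es" by (rule map_idI) (simp add: complex_eq_iff real)
  then have es: "es = map complex_of_real rs" unfolding rs_def by simp
  have inj: "p = q" if "map_poly complex_of_real p = map_poly complex_of_real q" for p q :: "real poly"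
  proof (rule poly_eqI)
    fix i have "coeff (map_poly complex_of_real p) i = coeff (map_poly complex_of_real q) i" using that by simp
    then show "coeff p i = coeff q i" by simp
  qed
  have cpA: "char_poly A = (\<Prod>r\<leftarrow>rs. [:- r, 1:])"
    by (rule inj) (simp add: hom[symmetric] cp es map_poly_linprod comp_def)
  obtain B P Q where schur: "schur_decomposition ?A es = (B,P,Q)" by (cases "schur_decomposition ?A es") auto
  from schur_decomposition[OF Ac cp schur] have wit: "similar_mat_wit ?A B P Q"
    and ut: "upper_triangular B" and diag: "diag_mat B = es" by auto
  from wit have carr: "B \<in> carrier_mat n n" "P \<in> carrier_mat n n" "Q \<in> carrier_mat n n"
    and QP: "Q * P = 1\<^sub>m n" and AB: "?A = P * B * Q"
    unfolding similar_mat_wit_def Let_def using A by auto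
  have sq: "X ^\<^sub>m 2 = X * X" if "X \<in> carrier_mat n n" for X :: "complex mat"
    using that by (simp add: numeral_2_eq_2)
  have wit2: "similar_mat_wit (?A * ?A) (B * B) P Q"
    using similar_mat_wit_pow[OF wit, of 2] by (simp add: sq[OF Ac] sq[OF carr(1)])
  have BB: "B * B \<in> carrier_mat n n" using carr by simp
  have dB: "B $$ (i,i) = es ! i" if "i < n" for i
  proof -
    have "es ! i = map (\<lambda>i. B $$ (i, i)) [0..<dim_row B] ! i" using diag by (simp add: diag_mat_def)
    then show ?thesis using that carr by simp
  qed
  have diagBB: "diag_mat (B * B) = map (\<lambda>e. e^2) es"
    by (rule nth_equalityI) (use carr len dB ut_sq(2)[OF carr(1) ut] in \<open>auto simp: diag_mat_def\<close>)
  have cpAA: "char_poly (?A * ?A) = (\<Prod>e\<leftarrow>es. [:- (e^2), 1:])"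
  proof -
    have "char_poly (?A * ?A) = char_poly (B * B)"
      by (rule char_poly_similar) (use wit2 in \<open>auto simp: similar_mat_def\<close>)
    also have "\<dots> = (\<Prod>a\<leftarrow>diag_mat (B * B). [:- a, 1:])"
      by (rule char_poly_upper_triangular[OF BB ut_sq(1)[OF carr(1) ut]])
    finally show ?thesis by (simp add: diagBB comp_def)
  qed
  have AAhom: "?A * ?A = map_mat complex_of_real (A * A)"
    by (rule of_real_hom.mat_hom_mult[OF A A, symmetric])
  have cpA2: "char_poly (A * A) = (\<Prod>r\<leftarrow>map (\<lambda>r. r^2) rs. [:- r, 1:])"
  proof (rule inj)
    have "char_poly (?A * ?A) = (\<Prod>r\<leftarrow>map (\<lambda>r. r^2) rs. [:- complex_of_real r, 1:])"
      by (simp add: cpAA es comp_def)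
    also have "\<dots> = map_poly complex_of_real (\<Prod>r\<leftarrow>map (\<lambda>r. r^2) rs. [:- r, 1:])"
      by (rule map_poly_linprod[symmetric])
    finally show "map_poly complex_of_real (char_poly (A * A)) = map_poly complex_of_real (\<Prod>r\<leftarrow>map (\<lambda>r. r^2) rs. [:- r, 1:])"
      by (simp add: of_real_hom.char_poly_hom[OF mult_carrier_mat[OF A A], symmetric] AAhom[symmetric])
  qed
  have trB: "tr n (?A * ?A) = tr n (B * B)"
  proof -
    have "?A * ?A = P * (B * B) * Q" using wit2 unfolding similar_mat_wit_def Let_def by simp
    then have "tr n (?A * ?A) = tr n (P * (B * B) * Q)" by (rule arg_cong)
    also have "\<dots> = tr n (Q * (P * (B * B)))"
      by (rule tr_comm) (use carr BB in auto)
    also have "Q * (P * (B * B)) = (Q * P) * (B * B)" using carr BB by (simp only: assoc_mult_mat[of Q n n P n "B * B" n])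
    also have "\<dots> = B * B" using QP BB by (simp add: left_mult_one_mat)
    finally show ?thesis .
  qed
  have "tr n (B * B) = (\<Sum>i<n. (es ! i)^2)"
    unfolding tr_def using ut_sq(2)[OF carr(1) ut] dB carr len
    by (intro sum.cong refl) auto
  also have "\<dots> = (\<Sum>e\<leftarrow>es. e^2)" using len by (simp add: sum_list_sum_nth atLeast0LessThan)
  also have "\<dots> = of_real (\<Sum>r\<leftarrow>rs. r^2)" unfolding es by (induct rs) simp_all
  finally have t1: "tr n (?A * ?A) = of_real (\<Sum>r\<leftarrow>rs. r^2)" using trB by simp
  have "tr n (?A * ?A) = (\<Sum>i<n. \<Sum>j<n. of_real (A$$(i,j) * A$$(j,i)))"
    unfolding tr_def using A by (intro sum.cong refl) (auto simp: scalar_prod_def atLeast0LessThan)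
  also have "\<dots> = of_real (\<Sum>i<n. \<Sum>j<n. (A$$(i,j))^2)"
    unfolding of_real_sum using sym by (intro sum.cong refl) (auto simp: power2_eq_square)
  finally have t2: "(\<Sum>r\<leftarrow>rs. r^2) = (\<Sum>i<n. \<Sum>j<n. (A$$(i,j))^2)" using t1 by (metis of_real_eq_iff)
  show ?thesis
  proof (rule exI[of _ rs], intro conjI)
    show "length rs = n" using len rs_def by simp
    show "proots (char_poly A) = mset rs" unfolding cpA by (rule proots_linprod)
    show "proots (char_poly (A*A)) = mset (map (\<lambda>r. r^2) rs)" unfolding cpA2 by (rule proots_linprod)
  qed (rule t2)
qed

lemma list_err:
  assumes "\<forall>x\<in>set xs. cmod (F x - c) \<le> g x"
  shows "cmod ((\<Sum>x\<leftarrow>xs. F x) - of_nat (length xs) * c) \<le> (\<Sum>x\<leftarrow>xs. g x)"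
  using assms
proof (induct xs)
  case (Cons a xs)
  have "(\<Sum>x\<leftarrow>a#xs. F x) - of_nat (length (a#xs)) * c = (F a - c) + ((\<Sum>x\<leftarrow>xs. F x) - of_nat (length xs) * c)"
    by (simp add: algebra_simps)
  then have "cmod ((\<Sum>x\<leftarrow>a#xs. F x) - of_nat (length (a#xs)) * c) \<le> cmod (F a - c) + cmod ((\<Sum>x\<leftarrow>xs. F x) - of_nat (length xs) * c)"
    by (metis norm_triangle_ineq)
  also have "\<dots> \<le> g a + (\<Sum>x\<leftarrow>xs. g x)" using Cons by (intro add_mono) auto
  finally show ?case by simp
qed simp

lemma Cc_bounded: assumes "Cc_fun F" shows "\<exists>K. \<forall>t. cmod (F t) \<le> K"
proof -
  from assms obtain R where c: "continuous_on UNIV F" and R: "\<forall>t. \<bar>t\<bar> > R \<longrightarrow> F t = 0"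
    unfolding Cc_fun_def by blast
  have "continuous_on {-\<bar>R\<bar>..\<bar>R\<bar>} (\<lambda>t. cmod (F t))"
    by (intro continuous_intros) (use c continuous_on_subset in auto)
  then obtain x0 where "\<forall>y\<in>{-\<bar>R\<bar>..\<bar>R\<bar>}. cmod (F y) \<le> cmod (F x0)"
    using continuous_attains_sup[of "{-\<bar>R\<bar>..\<bar>R\<bar>}" "\<lambda>t. cmod (F t)"] by force
  then obtain K where K: "\<forall>y\<in>F ` {-\<bar>R\<bar>..\<bar>R\<bar>}. norm y \<le> K" by auto
  have "cmod (F t) \<le> max K 0" for t
  proof (cases "\<bar>t\<bar> > \<bar>R\<bar>")
    case True then show ?thesis using R by auto
  next
    case False then have "t \<in> {-\<bar>R\<bar>..\<bar>R\<bar>}" by auto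
    then have "cmod (F t) \<le> K" using K by blast
    then show ?thesis by simp
  qed
  then show ?thesis by blast
qed

lemma avg_conv:
  fixes F :: "real \<Rightarrow> complex" and xs :: "nat \<Rightarrow> real list"
  assumes F: "Cc_fun F"
    and Lpos: "\<And>n. length (xs n) > 0"
    and bnd: "\<And>n. (\<Sum>x\<leftarrow>xs n. x^2) \<le> real (length (xs n)) * e n" and e: "e \<longlonglongrightarrow> 0"
  shows "(\<lambda>n. (\<Sum>x\<leftarrow>xs n. F x) / of_nat (length (xs n))) \<longlonglongrightarrow> F 0"
proof (rule LIMSEQ_I)
  fix r :: real assume r: "r > 0"
  obtain K where K: "\<forall>t. cmod (F t) \<le> K" using Cc_bounded[OF F] by blast
  have K0: "K \<ge> 0" using K norm_ge_zero order_trans by blast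
  have "isCont F 0" using F unfolding Cc_fun_def by (simp add: continuous_on_eq_continuous_at)
  then have "F \<midarrow>0\<rightarrow> F 0" by (simp add: isCont_def)
  from LIM_D[OF this, of "r/2"] r obtain d where d: "d > 0"
    and dF: "\<forall>t. t \<noteq> 0 \<and> norm (t - 0) < d \<longrightarrow> norm (F t - F 0) < r/2" by auto
  have pt: "cmod (F t - F 0) \<le> r/2 + 2*K/d^2 * t^2" for t
  proof (cases "\<bar>t\<bar> < d")
    case True
    then have "cmod (F t - F 0) \<le> r/2" using dF r by (cases "t = 0") (auto intro: less_imp_le)
    moreover have "0 \<le> 2*K/d^2 * t^2" using K0 by simp
    ultimately show ?thesis by linarith
  next
    case False
    then have "d^2 \<le> t^2" using d by (metis abs_of_pos not_less power2_abs power_mono less_imp_le)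
    then have "1 \<le> t^2 / d^2" using d by simp
    then have "2*K * 1 \<le> 2*K * (t^2/d^2)" using K0 by (intro mult_left_mono) auto
    moreover have "cmod (F t - F 0) \<le> 2*K" using K norm_triangle_ineq4[of "F t" "F 0"] by (smt (verit))
    moreover have "2*K * (t^2/d^2) = 2*K/d^2 * t^2" by simp
    ultimately show ?thesis using r by linarith
  qed
  define c where "c = 2*K/d^2"
  have c0: "c \<ge> 0" unfolding c_def using K0 by simp
  have "r / (2 * (c + 1)) > 0" using r c0 by simp
  from LIMSEQ_D[OF e this] obtain n0 where n0: "\<And>n. n \<ge> n0 \<Longrightarrow> \<bar>e n\<bar> < r / (2 * (c + 1))"
    by auto
  show "\<exists>no. \<forall>n\<ge>no. norm ((\<Sum>x\<leftarrow>xs n. F x) / of_nat (length (xs n)) - F 0) < r"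
  proof (intro exI allI impI)
    fix n assume n: "n \<ge> n0"
    let ?L = "length (xs n)"
    have Lp: "real ?L > 0" using Lpos[of n] by simp
    have "(\<Sum>x\<leftarrow>xs n. F x) / of_nat ?L - F 0 = ((\<Sum>x\<leftarrow>xs n. F x) - of_nat ?L * F 0) / of_nat ?L"
      using Lp by (simp add: field_simps)
    then have "norm ((\<Sum>x\<leftarrow>xs n. F x) / of_nat ?L - F 0) = cmod ((\<Sum>x\<leftarrow>xs n. F x) - of_nat ?L * F 0) / real ?L"
      by (simp add: norm_divide)
    also have "\<dots> \<le> (real ?L * (r/2) + c * (real ?L * e n)) / real ?L"
    proof (rule divide_right_mono)
      have "cmod ((\<Sum>x\<leftarrow>xs n. F x) - of_nat ?L * F 0) \<le> (\<Sum>x\<leftarrow>xs n. r/2 + c * x^2)"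
        using pt unfolding c_def by (intro list_err) auto
      also have "(\<Sum>x\<leftarrow>xs n. r/2 + c * x^2) = real ?L * (r/2) + c * (\<Sum>x\<leftarrow>xs n. x^2)"
        by (simp add: sum_list_addf sum_list_const_mult sum_list_triv)
      also have "\<dots> \<le> real ?L * (r/2) + c * (real ?L * e n)"
        using bnd[of n] c0 by (intro add_left_mono mult_left_mono) auto
      finally show "cmod ((\<Sum>x\<leftarrow>xs n. F x) - of_nat ?L * F 0) \<le> real ?L * (r/2) + c * (real ?L * e n)" .
    qed (use Lp in simp)
    also have "(real ?L * (r/2) + c * (real ?L * e n)) / real ?L = r/2 + c * e n"
      using Lp by (simp add: field_simps)
    finally have 1: "norm ((\<Sum>x\<leftarrow>xs n. F x) / of_nat ?L - F 0) \<le> r/2 + c * e n" .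
    have "c * e n \<le> c * \<bar>e n\<bar>" using c0 by (intro mult_left_mono) auto
    also have "\<dots> \<le> (c+1) * \<bar>e n\<bar>" by (intro mult_right_mono) auto
    also have "(c+1) * \<bar>e n\<bar> < (c+1) * (r / (2 * (c + 1)))"
      using n0[OF n] c0 by (intro mult_strict_left_mono) auto
    also have "(c+1) * (r / (2 * (c + 1))) = r/2" using c0 by (simp add: field_simps)
    finally show "norm ((\<Sum>x\<leftarrow>xs n. F x) / of_nat ?L - F 0) < r" using 1 by linarith
  qed
qed

lemma Cf_sym: "Cf N i j = Cf N j i"
  unfolding Cf_def Qf_def Eq_other_def by (intro sum.cong refl) auto

lemma Hbar_props:
  assumes N: "N > 0"
  shows "Hbar_CW \<Gamma> B N \<in> carrier_mat (2^N) (2^N)"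
    "\<forall>i<2^N. \<forall>j<2^N. Hbar_CW \<Gamma> B N $$ (i,j) = Hbar_CW \<Gamma> B N $$ (j,i)"
    "(\<Sum>i<2^N. \<Sum>j<2^N. (Hbar_CW \<Gamma> B N $$ (i,j))^2) \<le> real (2^N) * ((\<Gamma>^2/2 + 2*B^2) / real N)"
proof -
  show "Hbar_CW \<Gamma> B N \<in> carrier_mat (2^N) (2^N)" unfolding Hbar_CW_def H_CW_def by simp
  have idx: "Hbar_CW \<Gamma> B N $$ (i,j) = (1 / real N) * H_CW \<Gamma> B N $$ (i,j)" if "i < 2^N" "j < 2^N" for i j
    unfolding Hbar_CW_def using that by (simp add: H_CW_def)
  show "\<forall>i<2^N. \<forall>j<2^N. Hbar_CW \<Gamma> B N $$ (i,j) = Hbar_CW \<Gamma> B N $$ (j,i)"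
    by (auto simp: idx H_idx Cf_sym)
  have "(\<Sum>i<(2::nat)^N. \<Sum>j<(2::nat)^N. (Hbar_CW \<Gamma> B N $$ (i,j))^2)
      = (1 / real N)^2 * (\<Sum>i<(2::nat)^N. \<Sum>j<(2::nat)^N. (H_CW \<Gamma> B N $$ (i,j))^2)"
    unfolding sum_distrib_left by (intro sum.cong refl) (simp add: idx power2_eq_square)
  also have "\<dots> \<le> (1 / real N)^2 * ((\<Gamma>^2/2 + 2*B^2) * (real N * 2^N))"
    by (intro mult_left_mono frob_H[OF N]) auto
  also have "\<dots> = real (2^N) * ((\<Gamma>^2/2 + 2*B^2) / real N)"
    using N by (simp add: power2_eq_square field_simps)
  finally show "(\<Sum>i<2^N. \<Sum>j<2^N. (Hbar_CW \<Gamma> B N $$ (i,j))^2) \<le> real (2^N) * ((\<Gamma>^2/2 + 2*B^2) / real N)" .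
qed

theorem mainTheorem5:
  fixes \<Gamma> B :: real
  assumes "\<Gamma> > 0"
  shows "(\<forall>F. Cc_fun F \<longrightarrow>
           (\<lambda>n. (\<Sum>\<^sub># (image_mset F (eigenvalues_mset (Hbar_CW \<Gamma> B (Suc n)))))
                   / of_nat (2 ^ Suc n)) \<longlonglongrightarrow> F 0)
       \<and> (\<forall>F. Cc_fun F \<longrightarrow>
           (\<lambda>n. (\<Sum>\<^sub># (image_mset F (singular_values_mset (Hbar_CW \<Gamma> B (Suc n)))))
                   / of_nat (2 ^ Suc n)) \<longlonglongrightarrow> F 0)"
proof -
  define C where "C = (\<Gamma>^2/2 + 2*B^2)"
  define e where "e = (\<lambda>n. C / real (Suc n))"
  have e0: "e \<longlonglongrightarrow> 0"
  proof -
    have "(\<lambda>n. C * inverse (real (Suc n))) \<longlonglongrightarrow> C * 0"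
      by (intro tendsto_mult tendsto_const LIMSEQ_inverse_real_of_nat)
    then show ?thesis unfolding e_def by (simp add: divide_inverse)
  qed
  have "\<forall>n. \<exists>rs. length rs = 2^Suc n \<and> proots (char_poly (Hbar_CW \<Gamma> B (Suc n))) = mset rs \<and>
    proots (char_poly (Hbar_CW \<Gamma> B (Suc n) * Hbar_CW \<Gamma> B (Suc n))) = mset (map (\<lambda>r. r^2) rs) \<and>
    (\<Sum>r\<leftarrow>rs. r^2) \<le> real (2^Suc n) * e n"
  proof
    fix n
    let ?N = "Suc n"
    from Hbar_props[of ?N \<Gamma> B] have p: "Hbar_CW \<Gamma> B ?N \<in> carrier_mat (2^?N) (2^?N)"
      "\<forall>i<2^?N. \<forall>j<2^?N. Hbar_CW \<Gamma> B ?N $$ (i,j) = Hbar_CW \<Gamma> B ?N $$ (j,i)"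
      "(\<Sum>i<2^?N. \<Sum>j<2^?N. (Hbar_CW \<Gamma> B ?N $$ (i,j))^2) \<le> real (2^?N) * e n"
      unfolding e_def C_def by auto
    from sym_spectral[OF p(1) p(2)] p(3) show "\<exists>rs. length rs = 2^Suc n \<and> proots (char_poly (Hbar_CW \<Gamma> B (Suc n))) = mset rs \<and>
    proots (char_poly (Hbar_CW \<Gamma> B (Suc n) * Hbar_CW \<Gamma> B (Suc n))) = mset (map (\<lambda>r. r^2) rs) \<and>
    (\<Sum>r\<leftarrow>rs. r^2) \<le> real (2^Suc n) * e n" by auto
  qed
  then obtain R where R: "\<And>n. length (R n) = 2^Suc n"
    "\<And>n. proots (char_poly (Hbar_CW \<Gamma> B (Suc n))) = mset (R n)"
    "\<And>n. proots (char_poly (Hbar_CW \<Gamma> B (Suc n) * Hbar_CW \<Gamma> B (Suc n))) = mset (map (\<lambda>r. r^2) (R n))"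
    "\<And>n. (\<Sum>r\<leftarrow>R n. r^2) \<le> real (2^Suc n) * e n"
    by metis
  have tr: "transpose_mat (Hbar_CW \<Gamma> B (Suc n)) = Hbar_CW \<Gamma> B (Suc n)" for n
  proof -
    from Hbar_props[of "Suc n" \<Gamma> B] have p: "Hbar_CW \<Gamma> B (Suc n) \<in> carrier_mat (2^Suc n) (2^Suc n)"
      "\<forall>i<2^Suc n. \<forall>j<2^Suc n. Hbar_CW \<Gamma> B (Suc n) $$ (i,j) = Hbar_CW \<Gamma> B (Suc n) $$ (j,i)" by auto
    show ?thesis by (rule eq_matI) (use p in auto)
  qed
  show ?thesis
  proof (intro conjI allI impI)
    fix F :: "real \<Rightarrow> complex" assume F: "Cc_fun F"
    have eq: "(\<Sum>\<^sub># (image_mset F (eigenvalues_mset (Hbar_CW \<Gamma> B (Suc n))))) / of_nat (2 ^ Suc n)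
       = (\<Sum>x\<leftarrow>R n. F x) / of_nat (length (R n))" for n
      unfolding eigenvalues_mset_def R(2) R(1) by (simp add: sum_mset_sum_list mset_map[symmetric] del: mset_map)
    show "(\<lambda>n. (\<Sum>\<^sub># (image_mset F (eigenvalues_mset (Hbar_CW \<Gamma> B (Suc n))))) / of_nat (2 ^ Suc n)) \<longlonglongrightarrow> F 0"
      unfolding eq by (rule avg_conv[OF F _ _ e0]) (use R in auto)
  next
    fix F :: "real \<Rightarrow> complex" assume F: "Cc_fun F"
    have ms: "image_mset sqrt (mset (map (\<lambda>r. r^2) rs)) = mset (map abs rs)" for rs :: "real list"
      by (induct rs) auto
    have eq: "(\<Sum>\<^sub># (image_mset F (singular_values_mset (Hbar_CW \<Gamma> B (Suc n))))) / of_nat (2 ^ Suc n)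
       = (\<Sum>x\<leftarrow>map abs (R n). F x) / of_nat (length (map abs (R n)))" for n
      unfolding singular_values_mset_def tr R(3) ms
      by (simp add: R(1) sum_mset_sum_list mset_map[symmetric] del: mset_map)
    show "(\<lambda>n. (\<Sum>\<^sub># (image_mset F (singular_values_mset (Hbar_CW \<Gamma> B (Suc n))))) / of_nat (2 ^ Suc n)) \<longlonglongrightarrow> F 0"
      unfolding eq by (rule avg_conv[OF F _ _ e0]) (use R in \<open>auto simp: comp_def\<close>)
  qed
qed

end
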